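(* Let $\mathcal A$ be a Banach algebra and $\mathcal A^\sharp=\mathcal A\oplus\mathbb C$ its unitization. If $\mathcal A^\sharp$ is semiweakly amenable, then $\mathcal A$ is semiweakly amenable.
   Context: The unitization $\mathcal A^\sharp$ is $\mathcal A\oplus\mathbb C$ with product $(a,c)(b,c')=(ab+cb+c'a,cc')$. For a Banach algebra $\mathcal A$, $\mathcal A^*$ is the dual $\mathcal A$-bimodule ($\langle x,a\cdot f\rangle=\langle xa,f\rangle$, $\langle x,f\cdot a\rangle=\langle ax,f\rangle$). A derivation $D:\mathcal A\to X$ is a bounded linear map with $D(ab)=D(a)\cdot b+a\cdot D(b)$; it is inner if $D(a)=a\cdot x-x\cdot a$ for some $x\in X$. $\mathcal A$ is semiweakly amenable if every derivation $D:\mathcal A\to\mathcal A^*$ with $\langle D(a),b\rangle+\langle D(b),a\rangle=0$ for all $a,b\in\mathcal A$ is inner. *)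

theory Defs
  imports "HOL-Analysis.Analysis"
begin

text \<open>A complex Banach algebra: the underlying type is a (real) Banach space, and
  smul is a complex scalar multiplication extending the real one, compatible with
  the norm; mul is an associative, complex-bilinear, submultiplicative product.\<close>

definition cbanach_algebra :: "(complex \<Rightarrow> 'a::banach \<Rightarrow> 'a) \<Rightarrow> ('a \<Rightarrow> 'a \<Rightarrow> 'a) \<Rightarrow> bool" where
  "cbanach_algebra smul mul \<longleftrightarrow>
     (\<forall>r x. smul (complex_of_real r) x = scaleR r x) \<and>
     (\<forall>c x y. smul c (x + y) = smul c x + smul c y) \<and>
     (\<forall>c d x. smul (c + d) x = smul c x + smul d x) \<and>
     (\<forall>c d x. smul c (smul d x) = smul (c * d) x) \<and>
     (\<forall>c x. norm (smul c x) = cmod c * norm x) \<and>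
     (\<forall>x y z. mul (mul x y) z = mul x (mul y z)) \<and>
     (\<forall>x y z. mul (x + y) z = mul x z + mul y z) \<and>
     (\<forall>x y z. mul x (y + z) = mul x y + mul x z) \<and>
     (\<forall>c x y. mul (smul c x) y = smul c (mul x y)) \<and>
     (\<forall>c x y. mul x (smul c y) = smul c (mul x y)) \<and>
     (\<forall>x y. norm (mul x y) \<le> norm x * norm y)"

definition clinear_fun :: "(complex \<Rightarrow> 'a::plus \<Rightarrow> 'a) \<Rightarrow> ('a \<Rightarrow> complex) \<Rightarrow> bool" where
  "clinear_fun smul f \<longleftrightarrow>
     (\<forall>x y. f (x + y) = f x + f y) \<and> (\<forall>c x. f (smul c x) = c * f x)"

definition dual_elem :: "(complex \<Rightarrow> 'a::plus \<Rightarrow> 'a) \<Rightarrow> ('a \<Rightarrow> real) \<Rightarrow> ('a \<Rightarrow> complex) \<Rightarrow> bool" where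
  "dual_elem smul nrm f \<longleftrightarrow> clinear_fun smul f \<and> (\<exists>K. \<forall>x. cmod (f x) \<le> K * nrm x)"

text \<open>A derivation D : A \<rightarrow> A*, with D a viewed as the functional x \<mapsto> \<langle>x, D a\<rangle>.
  Module actions: \<langle>x, a\<cdot>f\<rangle> = \<langle>xa, f\<rangle>, \<langle>x, f\<cdot>a\<rangle> = \<langle>ax, f\<rangle>, so
  \<langle>x, D(ab)\<rangle> = \<langle>x, D(a)\<cdot>b\<rangle> + \<langle>x, a\<cdot>D(b)\<rangle> = \<langle>bx, D a\<rangle> + \<langle>xa, D b\<rangle>.
  Boundedness of D into A* (operator norm) is the bilinear bound.\<close>

definition dual_derivation ::
  "(complex \<Rightarrow> 'a::plus \<Rightarrow> 'a) \<Rightarrow> ('a \<Rightarrow> 'a \<Rightarrow> 'a) \<Rightarrow> ('a \<Rightarrow> real) \<Rightarrow> ('a \<Rightarrow> 'a \<Rightarrow> complex) \<Rightarrow> bool" where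
  "dual_derivation smul mul nrm D \<longleftrightarrow>
     (\<forall>a. dual_elem smul nrm (D a)) \<and>
     (\<forall>a b. D (a + b) = (\<lambda>x. D a x + D b x)) \<and>
     (\<forall>c a. D (smul c a) = (\<lambda>x. c * D a x)) \<and>
     (\<exists>K. \<forall>a x. cmod (D a x) \<le> K * nrm a * nrm x) \<and>
     (\<forall>a b x. D (mul a b) x = D a (mul b x) + D b (mul x a))"

text \<open>D is inner: D a = a\<cdot>f - f\<cdot>a for some f in A*, i.e. \<langle>x, D a\<rangle> = f(xa) - f(ax).\<close>

definition inner_dual_derivation ::
  "(complex \<Rightarrow> 'a::plus \<Rightarrow> 'a) \<Rightarrow> ('a \<Rightarrow> 'a \<Rightarrow> 'a) \<Rightarrow> ('a \<Rightarrow> real) \<Rightarrow> ('a \<Rightarrow> 'a \<Rightarrow> complex) \<Rightarrow> bool" where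
  "inner_dual_derivation smul mul nrm D \<longleftrightarrow>
     (\<exists>f. dual_elem smul nrm f \<and> (\<forall>a x. D a x = f (mul x a) - f (mul a x)))"

definition semiweakly_amenable ::
  "(complex \<Rightarrow> 'a::plus \<Rightarrow> 'a) \<Rightarrow> ('a \<Rightarrow> 'a \<Rightarrow> 'a) \<Rightarrow> ('a \<Rightarrow> real) \<Rightarrow> bool" where
  "semiweakly_amenable smul mul nrm \<longleftrightarrow>
     (\<forall>D. dual_derivation smul mul nrm D \<and> (\<forall>a b. D a b + D b a = 0)
          \<longrightarrow> inner_dual_derivation smul mul nrm D)"

definition unit_smul :: "(complex \<Rightarrow> 'a \<Rightarrow> 'a) \<Rightarrow> complex \<Rightarrow> 'a \<times> complex \<Rightarrow> 'a \<times> complex" where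
  "unit_smul smul c p = (smul c (fst p), c * snd p)"

definition unit_mul ::
  "(complex \<Rightarrow> 'a::plus \<Rightarrow> 'a) \<Rightarrow> ('a \<Rightarrow> 'a \<Rightarrow> 'a) \<Rightarrow> 'a \<times> complex \<Rightarrow> 'a \<times> complex \<Rightarrow> 'a \<times> complex" where
  "unit_mul smul mul p q =
     (mul (fst p) (fst q) + smul (snd p) (fst q) + smul (snd q) (fst p), snd p * snd q)"

definition unit_norm :: "'a::real_normed_vector \<times> complex \<Rightarrow> real" where
  "unit_norm p = norm (fst p) + cmod (snd p)"

end

theory Submission
  imports Defs
begin

theorem theorem3p8:
  fixes smul :: "complex \<Rightarrow> 'a::banach \<Rightarrow> 'a" and mul :: "'a \<Rightarrow> 'a \<Rightarrow> 'a"
  assumes "cbanach_algebra smul mul"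
    and "semiweakly_amenable (unit_smul smul) (unit_mul smul mul) unit_norm"
  shows "semiweakly_amenable smul mul norm"
  unfolding semiweakly_amenable_def
proof (intro allI impI)
  fix D :: "'a \<Rightarrow> 'a \<Rightarrow> complex"
  assume H: "dual_derivation smul mul norm D \<and> (\<forall>a b. D a b + D b a = 0)"
  have s0: "smul 0 x = 0" for x
    using assms(1) unfolding cbanach_algebra_def by (metis of_real_0 scaleR_zero_left)
  have de: "\<And>a. dual_elem smul norm (D a)" and dadd: "\<And>a b. D (a + b) = (\<lambda>x. D a x + D b x)"
    and dsm: "\<And>c a. D (smul c a) = (\<lambda>x. c * D a x)"
    and dder: "\<And>a b x. D (mul a b) x = D a (mul b x) + D b (mul x a)"
    and skew: "\<And>a b. D a b + D b a = 0"
    using H unfolding dual_derivation_def by auto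
  obtain K where K: "\<And>a x. cmod (D a x) \<le> K * norm a * norm x"
    using H unfolding dual_derivation_def by auto
  have ladd: "D a (x + y) = D a x + D a y" and lsm: "D a (smul c x) = c * D a x" for a x y c
    using de[of a] unfolding dual_elem_def clinear_fun_def by auto
  define E :: "'a \<times> complex \<Rightarrow> 'a \<times> complex \<Rightarrow> complex" where "E p q = D (fst p) (fst q)" for p q
  have Kb: "cmod (D a x) \<le> \<bar>K\<bar> * norm a * norm x" for a x
  proof -
    have "K * norm a * norm x \<le> \<bar>K\<bar> * norm a * norm x"
      by (intro mult_right_mono) (auto intro: mult_right_mono)
    thus ?thesis using K[of a x] by linarith
  qed
  have "dual_derivation (unit_smul smul) (unit_mul smul mul) unit_norm E"
    unfolding dual_derivation_def
  proof (intro conjI allI)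
    fix p
    show "dual_elem (unit_smul smul) unit_norm (E p)"
      unfolding dual_elem_def clinear_fun_def
    proof (intro conjI allI exI)
      fix x y show "E p (x + y) = E p x + E p y" by (simp add: E_def ladd)
    next
      fix c x show "E p (unit_smul smul c x) = c * E p x" by (simp add: E_def unit_smul_def lsm)
    next
      fix x
      have "cmod (E p x) \<le> \<bar>K\<bar> * norm (fst p) * norm (fst x)" by (simp add: E_def Kb)
      also have "\<dots> \<le> \<bar>K\<bar> * norm (fst p) * unit_norm x"
        by (intro mult_left_mono) (auto simp: unit_norm_def)
      finally show "cmod (E p x) \<le> \<bar>K\<bar> * norm (fst p) * unit_norm x" .
    qed
  next
    fix p q show "E (p + q) = (\<lambda>x. E p x + E q x)" by (rule ext) (simp add: E_def dadd fst_add)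
  next
    fix c p show "E (unit_smul smul c p) = (\<lambda>x. c * E p x)" by (rule ext) (simp add: E_def unit_smul_def dsm)
  next
    show "\<exists>K. \<forall>a x. cmod (E a x) \<le> K * unit_norm a * unit_norm x"
    proof (intro exI allI)
      fix a x
      have "cmod (E a x) \<le> \<bar>K\<bar> * norm (fst a) * norm (fst x)" by (simp add: E_def Kb)
      also have "\<dots> \<le> \<bar>K\<bar> * unit_norm a * unit_norm x"
        by (intro mult_mono) (auto simp: unit_norm_def intro: mult_left_mono)
      finally show "cmod (E a x) \<le> \<bar>K\<bar> * unit_norm a * unit_norm x" .
    qed
  next
    fix p q r :: "'a \<times> complex"
    obtain a \<alpha> where p: "p = (a, \<alpha>)" by (cases p)
    obtain b \<beta> where q: "q = (b, \<beta>)" by (cases q)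
    obtain x \<gamma> where r: "r = (x, \<gamma>)" by (cases r)
    have "D a b + D b a = 0" by (rule skew)
    then show "E (unit_mul smul mul p q) r = E p (unit_mul smul mul q r) + E q (unit_mul smul mul r p)"
      by (simp add: p q r E_def unit_mul_def dadd dsm ladd lsm dder algebra_simps)
        (metis add.commute add.left_commute add_0 distrib_left mult_zero_right)
  qed
  moreover have "\<forall>p q. E p q + E q p = 0" by (simp add: E_def skew)
  ultimately have "inner_dual_derivation (unit_smul smul) (unit_mul smul mul) unit_norm E"
    using assms(2) unfolding semiweakly_amenable_def by blast
  then obtain g where g: "dual_elem (unit_smul smul) unit_norm g"
    and gD: "\<And>p r. E p r = g (unit_mul smul mul r p) - g (unit_mul smul mul p r)"
    unfolding inner_dual_derivation_def by blast
  define f where "f x = g (x, 0)" for x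
  have "dual_elem smul norm f"
    unfolding dual_elem_def clinear_fun_def
  proof (intro conjI allI)
    fix x y
    have "g ((x, 0) + (y, 0)) = g (x, 0) + g (y, 0)"
      using g unfolding dual_elem_def clinear_fun_def by blast
    thus "f (x + y) = f x + f y" by (simp add: f_def)
  next
    fix c x
    have "g (unit_smul smul c (x, 0)) = c * g (x, 0)"
      using g unfolding dual_elem_def clinear_fun_def by blast
    thus "f (smul c x) = c * f x" by (simp add: f_def unit_smul_def)
  next
    obtain L where "\<forall>x. cmod (g x) \<le> L * unit_norm x" using g unfolding dual_elem_def by blast
    hence "\<forall>x. cmod (f x) \<le> L * norm x" by (metis f_def unit_norm_def fst_conv snd_conv norm_zero add_0_right)
    thus "\<exists>K. \<forall>x. cmod (f x) \<le> K * norm x" by blast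
  qed
  moreover have "\<forall>a x. D a x = f (mul x a) - f (mul a x)"
  proof (intro allI)
    fix a x
    have "D a x = E (a, 0) (x, 0)" by (simp add: E_def)
    also have "\<dots> = f (mul x a) - f (mul a x)" by (simp add: gD unit_mul_def s0 f_def)
    finally show "D a x = f (mul x a) - f (mul a x)" .
  qed
  ultimately show "inner_dual_derivation smul mul norm D"
    unfolding inner_dual_derivation_def by blast
qed

end
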